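(* Let $\mathcal{M}_i=(E_i,\rho_i)$, $i=1,2$, be $q$-matroids with sets of cyclic flats $\mathcal{Z}_i$, and let $\rho$ be the rank function of $\mathcal{M}_1\oplus\mathcal{M}_2$ on $E=E_1\oplus E_2$. Then for all $V\le E$, \[ \rho(V)=\min_{Z_1\in\mathcal{Z}_1,\,Z_2\in\mathcal{Z}_2}\Big(\rho(Z_1\oplus Z_2)+\dim\big((V+Z_1\oplus Z_2)/(Z_1\oplus Z_2)\big)\Big). \]
   Context: Let $\mathbb{F}=\mathbb{F}_q$. A $q$-matroid is $\mathcal{M}=(E,\rho)$, $E$ a finite-dimensional $\mathbb{F}$-vector space, $\rho$ from subspaces to $\mathbb{Z}_{\ge0}$ with $0\le\rho(V)\le\dim V$, monotone and submodular. Flat: $\rho(F+\langle x\rangle)>\rho(F)$ for all $x\notin F$. Cyclic core: $\mathrm{cyc}(V)=\{x\in V\mid\rho(W)=\rho(V)\text{ for all }W\le V\text{ with }W+\langle x\rangle=V\}$; cyclic: $\mathrm{cyc}(V)=V$; a cyclic flat is a flat that is cyclic. Direct sum: for $E=E_1\oplus E_2$ with projections $\pi_i$, $\mathcal{M}_1\oplus\mathcal{M}_2=(E,\rho)$ where $\rho(V)=\dim V+\min_{X\le V}(\rho_1(\pi_1(X))+\rho_2(\pi_2(X))-\dim X)$. *)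

theory Defs
  imports Complex_Main "HOL-Library.Product_Plus"
begin

text \<open>A vector space over the scalar field 'f is given by a scaling function
  s :: 'f \<Rightarrow> 'v \<Rightarrow> 'v on the type 'v (the whole type is the space E).\<close>

definition ssum :: "'v::ab_group_add set \<Rightarrow> 'v set \<Rightarrow> 'v set" where
  "ssum V W = {x + y | x y. x \<in> V \<and> y \<in> W}"

definition qmatroid :: "('f::field \<Rightarrow> 'v::ab_group_add \<Rightarrow> 'v) \<Rightarrow> ('v set \<Rightarrow> nat) \<Rightarrow> bool" where
  "qmatroid s \<rho> \<longleftrightarrow>
     vector_space s \<and>
     (\<exists>B. finite B \<and> module.span s B = UNIV) \<and>
     (\<forall>V. module.subspace s V \<longrightarrow> \<rho> V \<le> vector_space.dim s V) \<and>
     (\<forall>V W. module.subspace s V \<and> module.subspace s W \<and> V \<subseteq> W \<longrightarrow> \<rho> V \<le> \<rho> W) \<and>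
     (\<forall>V W. module.subspace s V \<and> module.subspace s W \<longrightarrow>
        \<rho> (ssum V W) + \<rho> (V \<inter> W) \<le> \<rho> V + \<rho> W)"

definition is_flat :: "('f::field \<Rightarrow> 'v::ab_group_add \<Rightarrow> 'v) \<Rightarrow> ('v set \<Rightarrow> nat) \<Rightarrow> 'v set \<Rightarrow> bool" where
  "is_flat s \<rho> F \<longleftrightarrow> module.subspace s F \<and>
     (\<forall>x. x \<notin> F \<longrightarrow> \<rho> (ssum F (module.span s {x})) > \<rho> F)"

definition cyc :: "('f::field \<Rightarrow> 'v::ab_group_add \<Rightarrow> 'v) \<Rightarrow> ('v set \<Rightarrow> nat) \<Rightarrow> 'v set \<Rightarrow> 'v set" where
  "cyc s \<rho> V = {x \<in> V. \<forall>W. module.subspace s W \<and> W \<subseteq> V \<and> ssum W (module.span s {x}) = V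
                            \<longrightarrow> \<rho> W = \<rho> V}"

definition is_cyclic :: "('f::field \<Rightarrow> 'v::ab_group_add \<Rightarrow> 'v) \<Rightarrow> ('v set \<Rightarrow> nat) \<Rightarrow> 'v set \<Rightarrow> bool" where
  "is_cyclic s \<rho> V \<longleftrightarrow> cyc s \<rho> V = V"

definition cyclic_flats :: "('f::field \<Rightarrow> 'v::ab_group_add \<Rightarrow> 'v) \<Rightarrow> ('v set \<Rightarrow> nat) \<Rightarrow> 'v set set" where
  "cyclic_flats s \<rho> = {Z. is_flat s \<rho> Z \<and> is_cyclic s \<rho> Z}"

text \<open>Scaling on the external direct sum E1 \<oplus> E2, realised as the product type.\<close>
definition prod_scale :: "('f \<Rightarrow> 'v1 \<Rightarrow> 'v1) \<Rightarrow> ('f \<Rightarrow> 'v2 \<Rightarrow> 'v2) \<Rightarrow> 'f \<Rightarrow> 'v1 \<times> 'v2 \<Rightarrow> 'v1 \<times> 'v2" where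
  "prod_scale s1 s2 c p = (s1 c (fst p), s2 c (snd p))"

text \<open>Since dim X \<le> dim V, the quantity is computed in nat without truncation.\<close>
definition dsum_rank ::
  "('f::field \<Rightarrow> 'v1::ab_group_add \<Rightarrow> 'v1) \<Rightarrow> ('v1 set \<Rightarrow> nat) \<Rightarrow>
   ('f \<Rightarrow> 'v2::ab_group_add \<Rightarrow> 'v2) \<Rightarrow> ('v2 set \<Rightarrow> nat) \<Rightarrow> ('v1 \<times> 'v2) set \<Rightarrow> nat" where
  "dsum_rank s1 \<rho>1 s2 \<rho>2 V =
     Min {vector_space.dim (prod_scale s1 s2) V + \<rho>1 (fst ` X) + \<rho>2 (snd ` X)
            - vector_space.dim (prod_scale s1 s2) X
          | X. module.subspace (prod_scale s1 s2) X \<and> X \<subseteq> V}"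

text \<open>Dimension of the quotient space A / B for B \<le> A (finite-dimensional): dim A - dim B.\<close>
definition quot_dim :: "('f::field \<Rightarrow> 'v::ab_group_add \<Rightarrow> 'v) \<Rightarrow> 'v set \<Rightarrow> 'v set \<Rightarrow> nat" where
  "quot_dim s A B = vector_space.dim s A - vector_space.dim s B"

end

theory Submission
  imports Defs
begin


lemma fd_exists:
  assumes vs: "vector_space s" and fin: "finite B0" and sp: "module.span s B0 = UNIV"
  shows "\<exists>B. finite_dimensional_vector_space s B"
proof -
  interpret vector_space s by fact
  obtain B where B: "independent B" "UNIV \<subseteq> span B"
    using basis_exists[of UNIV] by metis
  have "finite B" using independent_span_bound[OF fin B(1)] sp by auto
  then have "finite_dimensional_vector_space s B"
    using B by unfold_locales auto
  then show ?thesis by blast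
qed

lemma qmatroid_fd: "qmatroid s \<rho> \<Longrightarrow> \<exists>B. finite_dimensional_vector_space s B"
  unfolding qmatroid_def using fd_exists by metis

locale qm = finite_dimensional_vector_space scale Bs
  for scale :: "'f::field \<Rightarrow> 'v::ab_group_add \<Rightarrow> 'v" and Bs +
  fixes \<rho> :: "'v set \<Rightarrow> nat"
  assumes qmat: "qmatroid scale \<rho>"
begin

lemma rho_le_dim: "subspace V \<Longrightarrow> \<rho> V \<le> dim V"
  using qmat unfolding qmatroid_def by blast
lemma rho_mono: "subspace V \<Longrightarrow> subspace W \<Longrightarrow> V \<subseteq> W \<Longrightarrow> \<rho> V \<le> \<rho> W"
  using qmat unfolding qmatroid_def by blast
lemma rho_sub: "subspace V \<Longrightarrow> subspace W \<Longrightarrow> \<rho> (ssum V W) + \<rho> (V \<inter> W) \<le> \<rho> V + \<rho> W"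
  using qmat unfolding qmatroid_def by blast
lemma subspace_ssum: "subspace V \<Longrightarrow> subspace W \<Longrightarrow> subspace (ssum V W)"
  unfolding ssum_def by (rule subspace_sums)
lemma ssum_sup1: "subspace W \<Longrightarrow> V \<subseteq> ssum V W"
  unfolding ssum_def using subspace_0 by force
lemma ssum_sup2: "subspace V \<Longrightarrow> W \<subseteq> ssum V W"
  unfolding ssum_def using subspace_0 by force
lemma ssum_le: "V \<subseteq> U \<Longrightarrow> W \<subseteq> U \<Longrightarrow> subspace U \<Longrightarrow> ssum V W \<subseteq> U"
  unfolding ssum_def using subspace_add by blast
lemma dim_ssum: "subspace V \<Longrightarrow> subspace W \<Longrightarrow> dim (ssum V W) + dim (V \<inter> W) = dim V + dim W"
  unfolding ssum_def by (rule dim_sums_Int)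

lemma add_line:
  assumes W: "subspace W" and x: "x \<notin> W"
  shows "dim (ssum W (span {x})) = dim W + 1" "\<rho> (ssum W (span {x})) \<le> \<rho> W + 1"
proof -
  have x0: "x \<noteq> 0" using x subspace_0[OF W] by auto
  have int: "W \<inter> span {x} = {0}"
  proof safe
    fix y assume y: "y \<in> W" "y \<in> span {x}"
    then obtain k where k: "y = scale k x" using span_singleton by auto
    show "y = 0"
    proof (cases "k = 0")
      case False
      then have "x = scale (inverse k) y" using k by simp
      then have "x \<in> W" using subspace_scale[OF W y(1)] by simp
      then show ?thesis using x by simp
    qed (simp add: k)
  next
    show "0 \<in> W" by (rule subspace_0[OF W])
    show "0 \<in> span {x}" by (rule span_zero)
  qed
  have d1: "dim (span {x}) = 1" using x0 by simp
  have "dim {0::'v} = 0" by simp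
  then show "dim (ssum W (span {x})) = dim W + 1"
    using dim_ssum[OF W subspace_span[of "{x}"]] int d1 by simp
  have "\<rho> (span {x}) \<le> 1" using rho_le_dim[of "span {x}"] d1 by simp
  then show "\<rho> (ssum W (span {x})) \<le> \<rho> W + 1"
    using rho_sub[OF W subspace_span[of "{x}"]] by simp
qed


lemma exists_cf:
  assumes A: "subspace A"
  shows "\<exists>Z \<in> cyclic_flats scale \<rho>. \<rho> Z + (dim (ssum A Z) - dim Z) \<le> \<rho> A"
proof -
  define g where "g Z = \<rho> Z + (dim A - dim (A \<inter> Z))" for Z
  have gq: "dim (ssum A Z) - dim Z = dim A - dim (A \<inter> Z)" if "subspace Z" for Z
    using dim_ssum[OF A that] by simp
  define N where "N = dimension"
  have dN: "dim S \<le> N" for S unfolding N_def by (rule dim_subset_UNIV)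
  obtain Z0 where Z0: "subspace Z0" "\<forall>Y. subspace Y \<longrightarrow> g Z0 \<le> g Y"
    using ex_has_least_nat[of subspace A g] A by blast
  define m2 where "m2 Z = N + \<rho> Z - dim Z" for Z
  obtain Z1 where Z1: "subspace Z1 \<and> g Z1 = g Z0"
     "\<forall>Y. subspace Y \<and> g Y = g Z0 \<longrightarrow> m2 Z1 \<le> m2 Y"
    using ex_has_least_nat[of "\<lambda>Y. subspace Y \<and> g Y = g Z0" Z0 m2] Z0 by blast
  obtain Z where Z: "(subspace Z \<and> g Z = g Z0) \<and> m2 Z = m2 Z1"
     "\<forall>Y. (subspace Y \<and> g Y = g Z0) \<and> m2 Y = m2 Z1 \<longrightarrow> dim Z \<le> dim Y"
    using ex_has_least_nat[of "\<lambda>Y. (subspace Y \<and> g Y = g Z0) \<and> m2 Y = m2 Z1" Z1 dim] Z1 by blast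
  have Zs: "subspace Z" using Z by blast
  have "g Z \<le> g A" using Z(1) Z0 A by metis
  also have "g A = \<rho> A" unfolding g_def by simp
  finally have gZ: "g Z \<le> \<rho> A" .
  have flat: "is_flat scale \<rho> Z"
    unfolding is_flat_def
  proof (intro conjI allI impI Zs)
    fix x assume x: "x \<notin> Z"
    show "\<rho> Z < \<rho> (ssum Z (span {x}))"
    proof (rule ccontr)
      assume nl: "\<not> ?thesis"
      define Z' where "Z' = ssum Z (span {x})"
      have Z's: "subspace Z'" unfolding Z'_def by (rule subspace_ssum[OF Zs subspace_span])
      have sub: "Z \<subseteq> Z'" unfolding Z'_def by (rule ssum_sup1[OF subspace_span])
      have r: "\<rho> Z' = \<rho> Z" using rho_mono[OF Zs Z's sub] nl unfolding Z'_def by simp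
      have d: "dim Z' = dim Z + 1" unfolding Z'_def by (rule add_line(1)[OF Zs x])
      have "dim (A \<inter> Z) \<le> dim (A \<inter> Z')" using sub by (intro dim_subset) blast
      moreover have "dim (A \<inter> Z') \<le> dim A" by (intro dim_subset) blast
      ultimately have "g Z' \<le> g Z" unfolding g_def using r by simp
      moreover have "g Z0 \<le> g Z'" using Z0 Z's by blast
      ultimately have "g Z' = g Z0" using Z(1) by linarith
      then have "m2 Z1 \<le> m2 Z'" using Z1 Z's by blast
      moreover have "dim Z' \<le> N" by (rule dN)
      ultimately have "m2 Z1 \<le> m2 Z'" "dim Z' \<le> N" .
      moreover have "m2 Z = m2 Z1" using Z(1) by blast
      ultimately show False using d r unfolding m2_def by linarith
    qed
  qed
  have cyc: "is_cyclic scale \<rho> Z"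
    unfolding is_cyclic_def cyc_def
  proof (rule set_eqI, rule iffI)
    fix x assume "x \<in> {x \<in> Z. \<forall>W. subspace W \<and> W \<subseteq> Z \<and> ssum W (span {x}) = Z \<longrightarrow> \<rho> W = \<rho> Z}"
    then show "x \<in> Z" by blast
  next
    fix x assume xZ: "x \<in> Z"
    have "\<rho> W = \<rho> Z" if W: "subspace W" "W \<subseteq> Z" "ssum W (span {x}) = Z" for W
    proof (cases "x \<in> W")
      case True
      have "span {x} \<subseteq> W" using True W(1) by (intro span_minimal) auto
      then have "ssum W (span {x}) \<subseteq> W" by (rule ssum_le[OF order_refl _ W(1)])
      then have "Z \<subseteq> W" unfolding W(3) .
      then have "W = Z" by (rule subset_antisym[OF W(2)])
      then show ?thesis by simp
    next
      case False
      have d: "dim Z = dim W + 1" using add_line(1)[OF W(1) False] unfolding W(3) .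
      have r: "\<rho> Z \<le> \<rho> W + 1" using add_line(2)[OF W(1) False] unfolding W(3) .
      have r2: "\<rho> W \<le> \<rho> Z" using rho_mono[OF W(1) Zs W(2)] .
      show ?thesis
      proof (rule ccontr)
        assume ne: "\<rho> W \<noteq> \<rho> Z"
        have AZs: "subspace (A \<inter> Z)" using subspace_inter[OF A Zs] .
        have e1: "dim (ssum (A \<inter> Z) W) + dim ((A \<inter> Z) \<inter> W) = dim (A \<inter> Z) + dim W"
          by (rule dim_ssum[OF AZs W(1)])
        have "ssum (A \<inter> Z) W \<subseteq> Z" by (rule ssum_le[OF Int_lower2 W(2) Zs])
        then have e2: "dim (ssum (A \<inter> Z) W) \<le> dim Z" by (rule dim_subset)
        have e3: "(A \<inter> Z) \<inter> W = A \<inter> W" using W(2) by blast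
        have e4: "dim (A \<inter> W) \<le> dim (A \<inter> Z)" using W(2) by (intro dim_subset) blast
        have e5: "dim (A \<inter> Z) \<le> dim A" by (intro dim_subset) blast
        have e6: "dim (A \<inter> Z) \<le> dim (A \<inter> W) + 1" using e1[unfolded e3] e2 d by linarith
        have gW: "g W \<le> g Z" unfolding g_def using e4 e5 e6 r r2 ne by linarith
        moreover have "g Z0 \<le> g W" using Z0 W(1) by blast
        ultimately have gW': "g W = g Z0" using Z(1) by linarith
        have "dim Z \<le> N" by (rule dN)
        then have "m2 W = m2 Z" unfolding m2_def using d r r2 ne by linarith
        moreover have "m2 Z = m2 Z1" using Z(1) by blast
        ultimately have "m2 W = m2 Z1" by simp
        then have "dim Z \<le> dim W" using Z(2) W(1) gW' by simp
        then show False using d by linarith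
      qed
    qed
    then show "x \<in> {x \<in> Z. \<forall>W. subspace W \<and> W \<subseteq> Z \<and> ssum W (span {x}) = Z \<longrightarrow> \<rho> W = \<rho> Z}"
      using xZ by blast
  qed
  have "Z \<in> cyclic_flats scale \<rho>" unfolding cyclic_flats_def using flat cyc by blast
  moreover have "\<rho> Z + (dim (ssum A Z) - dim Z) \<le> \<rho> A"
    using gZ gq[OF Zs] unfolding g_def by simp
  ultimately show ?thesis by blast
qed

end



lemma vs_prod:
  assumes "vector_space s1" "vector_space s2"
  shows "vector_space (prod_scale s1 s2)"
proof -
  interpret v1: vector_space s1 by fact
  interpret v2: vector_space s2 by fact
  show ?thesis
    unfolding vector_space_def prod_scale_def
    by (simp add: v1.vector_space_assms v2.vector_space_assms)
qed

lemma lin_inl: "vector_space s1 \<Longrightarrow> vector_space s2 \<Longrightarrow> Vector_Spaces.linear s1 (prod_scale s1 s2) (\<lambda>x. (x, 0))"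
proof -
  assume a: "vector_space s1" "vector_space s2"
  interpret v2: vector_space s2 by fact
  show ?thesis
  apply (rule linear_module_homI)
  apply (unfold module_hom_def module_hom_axioms_def module_iff_vector_space)
  using vs_prod[of s1 s2] a
  by (auto simp: prod_scale_def)
qed

lemma lin_inr: "vector_space s1 \<Longrightarrow> vector_space s2 \<Longrightarrow> Vector_Spaces.linear s2 (prod_scale s1 s2) (\<lambda>x. (0, x))"
proof -
  assume a: "vector_space s1" "vector_space s2"
  interpret v1: vector_space s1 by fact
  show ?thesis
  apply (rule linear_module_homI)
  apply (unfold module_hom_def module_hom_axioms_def module_iff_vector_space)
  using vs_prod[of s1 s2] a
  by (auto simp: prod_scale_def)
qed

lemma lin_fst: "vector_space s1 \<Longrightarrow> vector_space s2 \<Longrightarrow> Vector_Spaces.linear (prod_scale s1 s2) s1 fst"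
  apply (rule linear_module_homI)
  apply (unfold module_hom_def module_hom_axioms_def module_iff_vector_space)
  using vs_prod[of s1 s2]
  by (auto simp: prod_scale_def)

lemma lin_snd: "vector_space s1 \<Longrightarrow> vector_space s2 \<Longrightarrow> Vector_Spaces.linear (prod_scale s1 s2) s2 snd"
  apply (rule linear_module_homI)
  apply (unfold module_hom_def module_hom_axioms_def module_iff_vector_space)
  using vs_prod[of s1 s2]
  by (auto simp: prod_scale_def)

lemma fd_prod:
  assumes f1: "finite_dimensional_vector_space s1 B1" and f2: "finite_dimensional_vector_space s2 B2"
  shows "\<exists>B. finite_dimensional_vector_space (prod_scale s1 s2) B"
proof -
  interpret v1: finite_dimensional_vector_space s1 B1 by fact
  interpret v2: finite_dimensional_vector_space s2 B2 by fact
  interpret S: vector_space "prod_scale s1 s2" by (rule vs_prod) unfold_locales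
  interpret l1: Vector_Spaces.linear s1 "prod_scale s1 s2" "\<lambda>x. (x, 0)" by (rule lin_inl) unfold_locales
  interpret l2: Vector_Spaces.linear s2 "prod_scale s1 s2" "\<lambda>x. (0, x)" by (rule lin_inr) unfold_locales
  let ?B = "(\<lambda>x. (x, 0)) ` B1 \<union> (\<lambda>x. (0, x)) ` B2"
  have "S.span ?B = UNIV"
  proof safe
    fix a b
    have "(a, 0) \<in> S.span ((\<lambda>x. (x, 0)) ` B1)" using l1.span_image v1.span_Basis by auto
    then have 1: "(a, 0) \<in> S.span ?B" using S.span_mono[of "(\<lambda>x. (x, 0)) ` B1" ?B] by blast
    have "(0, b) \<in> S.span ((\<lambda>x. (0, x)) ` B2)" using l2.span_image v2.span_Basis by auto
    then have 2: "(0, b) \<in> S.span ?B" using S.span_mono[of "(\<lambda>x. (0, x)) ` B2" ?B] by blast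
    have "(a, 0) + (0, b) \<in> S.span ?B" by (rule S.span_add[OF 1 2])
    then show "(a, b) \<in> S.span ?B" by simp
  qed simp
  moreover have "finite ?B" using v1.finite_Basis v2.finite_Basis by simp
  ultimately show ?thesis using fd_exists[OF S.vector_space_axioms] by blast
qed

lemma ssum_times: "ssum (A \<times> B) (C \<times> D) = ssum A C \<times> ssum B D"
  unfolding ssum_def by force

locale two = q1: qm s1 B1 \<rho>1 + q2: qm s2 B2 \<rho>2 + S: finite_dimensional_vector_space "prod_scale s1 s2" BS
  for s1 :: "'f::field \<Rightarrow> 'v1::ab_group_add \<Rightarrow> 'v1" and B1 \<rho>1
  and s2 :: "'f \<Rightarrow> 'v2::ab_group_add \<Rightarrow> 'v2" and B2 \<rho>2 and BS
begin

lemma sub_fst: "S.subspace X \<Longrightarrow> q1.subspace (fst ` X)"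
  using lin_fst[OF q1.vector_space_axioms q2.vector_space_axioms]
  by (metis linear_iff_module_hom module_hom.subspace_image)

lemma sub_snd: "S.subspace X \<Longrightarrow> q2.subspace (snd ` X)"
  using lin_snd[OF q1.vector_space_axioms q2.vector_space_axioms]
  by (metis linear_iff_module_hom module_hom.subspace_image)

lemma sub_times: "q1.subspace A \<Longrightarrow> q2.subspace B \<Longrightarrow> S.subspace (A \<times> B)"
  unfolding S.subspace_def q1.subspace_def q2.subspace_def
  by (auto simp: prod_scale_def zero_prod_def)

lemma dim_times:
  assumes A: "q1.subspace A" and B: "q2.subspace B"
  shows "S.dim (A \<times> B) = q1.dim A + q2.dim B"
proof -
  interpret p1: finite_dimensional_vector_space_pair_1 s1 B1 "prod_scale s1 s2" ..
  interpret p2: finite_dimensional_vector_space_pair_1 s2 B2 "prod_scale s1 s2" ..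
  have d1: "S.dim ((\<lambda>x. (x, 0)) ` A) = q1.dim A"
    by (rule p1.dim_image_eq[OF lin_inl[OF q1.vector_space_axioms q2.vector_space_axioms]])
       (auto simp: inj_on_def)
  have d2: "S.dim ((\<lambda>x. (0, x)) ` B) = q2.dim B"
    by (rule p2.dim_image_eq[OF lin_inr[OF q1.vector_space_axioms q2.vector_space_axioms]])
       (auto simp: inj_on_def)
  have e1: "(\<lambda>x. (x, 0)) ` A = A \<times> {0}" by auto
  have e2: "(\<lambda>x. (0, x)) ` B = {0} \<times> B" by auto
  have s1': "S.subspace (A \<times> {0})" by (rule sub_times[OF A q2.subspace_single_0])
  have s2': "S.subspace ({0} \<times> B)" by (rule sub_times[OF q1.subspace_single_0 B])
  have "S.dim {x + y |x y. x \<in> A \<times> {0} \<and> y \<in> {0} \<times> B} + S.dim ((A \<times> {0}) \<inter> ({0} \<times> B))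
      = S.dim (A \<times> {0}) + S.dim ({0} \<times> B)"
    by (rule S.dim_sums_Int[OF s1' s2'])
  moreover have "{x + y |x y. x \<in> A \<times> {0} \<and> y \<in> {0} \<times> B} = A \<times> B"
    using ssum_times[of A "{0}" "{0}" B] unfolding ssum_def by force
  moreover have "(A \<times> {0}) \<inter> ({0} \<times> B) \<subseteq> {0}" by (auto simp: zero_prod_def)
  then have "S.dim ((A \<times> {0}) \<inter> ({0} \<times> B)) = 0" by simp
  ultimately show ?thesis using d1 d2 unfolding e1 e2 by simp
qed

end



context two begin

definition FF where "FF V X = S.dim V + \<rho>1 (fst ` X) + \<rho>2 (snd ` X) - S.dim X"

lemma R_eq: "dsum_rank s1 \<rho>1 s2 \<rho>2 V = Min {FF V X | X. S.subspace X \<and> X \<subseteq> V}"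
  unfolding dsum_rank_def FF_def ..

lemma FF_bound: "S.subspace X \<Longrightarrow> FF V X \<le> S.dim V + q1.dimension + q2.dimension"
proof -
  assume X: "S.subspace X"
  have "\<rho>1 (fst ` X) \<le> q1.dimension"
    using q1.rho_le_dim[OF sub_fst[OF X]] q1.dim_subset_UNIV[of "fst ` X"] by linarith
  moreover have "\<rho>2 (snd ` X) \<le> q2.dimension"
    using q2.rho_le_dim[OF sub_snd[OF X]] q2.dim_subset_UNIV[of "snd ` X"] by linarith
  ultimately show ?thesis unfolding FF_def by linarith
qed

lemma FF_fin: "finite {FF V X | X. S.subspace X \<and> X \<subseteq> V}"
  by (rule finite_subset[of _ "{..S.dim V + q1.dimension + q2.dimension}"]) (auto dest: FF_bound)

lemma R_le: "S.subspace X \<Longrightarrow> X \<subseteq> V \<Longrightarrow> dsum_rank s1 \<rho>1 s2 \<rho>2 V \<le> FF V X"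
  unfolding R_eq by (rule Min_le[OF FF_fin]) blast

lemma R_attain:
  assumes "S.subspace V"
  shows "\<exists>X. S.subspace X \<and> X \<subseteq> V \<and> dsum_rank s1 \<rho>1 s2 \<rho>2 V = FF V X"
proof -
  have "{0} \<subseteq> V" using S.subspace_0[OF assms] by simp
  then have ne: "{FF V X | X. S.subspace X \<and> X \<subseteq> V} \<noteq> {}" using S.subspace_single_0 by blast
  show ?thesis using Min_in[OF FF_fin ne] unfolding R_eq by blast
qed

lemma rho1_0: "\<rho>1 {0} = 0"
  using q1.rho_le_dim[OF q1.subspace_single_0] by simp
lemma rho2_0: "\<rho>2 {0} = 0"
  using q2.rho_le_dim[OF q2.subspace_single_0] by simp

lemma R_le_dim: "S.subspace V \<Longrightarrow> dsum_rank s1 \<rho>1 s2 \<rho>2 V \<le> S.dim V"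
proof -
  assume V: "S.subspace V"
  have "{0} \<subseteq> V" using S.subspace_0[OF V] by simp
  then have "dsum_rank s1 \<rho>1 s2 \<rho>2 V \<le> FF V {0}" using R_le S.subspace_single_0 by blast
  also have "FF V {0} = S.dim V" unfolding FF_def using rho1_0 rho2_0 by simp
  finally show ?thesis .
qed

lemma R_times:
  assumes "q1.subspace Z1" "q2.subspace Z2"
  shows "dsum_rank s1 \<rho>1 s2 \<rho>2 (Z1 \<times> Z2) \<le> \<rho>1 Z1 + \<rho>2 Z2"
proof -
  have "dsum_rank s1 \<rho>1 s2 \<rho>2 (Z1 \<times> Z2) \<le> FF (Z1 \<times> Z2) (Z1 \<times> Z2)"
    using R_le sub_times[OF assms] by blast
  moreover have "Z1 \<noteq> {}" "Z2 \<noteq> {}" using q1.subspace_0[OF assms(1)] q2.subspace_0[OF assms(2)] by auto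
  ultimately show ?thesis unfolding FF_def by simp
qed

lemma R_mono:
  assumes V: "S.subspace V" and W: "S.subspace W" and VW: "V \<subseteq> W"
  shows "dsum_rank s1 \<rho>1 s2 \<rho>2 V \<le> dsum_rank s1 \<rho>1 s2 \<rho>2 W"
proof -
  obtain X where X: "S.subspace X" "X \<subseteq> W" "dsum_rank s1 \<rho>1 s2 \<rho>2 W = FF W X"
    using R_attain[OF W] by blast
  have X's: "S.subspace (X \<inter> V)" by (rule S.subspace_inter[OF X(1) V])
  have 1: "dsum_rank s1 \<rho>1 s2 \<rho>2 V \<le> FF V (X \<inter> V)" using R_le[OF X's] by blast
  have 2: "\<rho>1 (fst ` (X \<inter> V)) \<le> \<rho>1 (fst ` X)"
    by (rule q1.rho_mono[OF sub_fst[OF X's] sub_fst[OF X(1)]]) blast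
  have 3: "\<rho>2 (snd ` (X \<inter> V)) \<le> \<rho>2 (snd ` X)"
    by (rule q2.rho_mono[OF sub_snd[OF X's] sub_snd[OF X(1)]]) blast
  have 4: "S.dim {x + y |x y. x \<in> X \<and> y \<in> V} + S.dim (X \<inter> V) = S.dim X + S.dim V"
    by (rule S.dim_sums_Int[OF X(1) V])
  have "{x + y |x y. x \<in> X \<and> y \<in> V} \<subseteq> W" using X(2) VW S.subspace_add[OF W] by blast
  then have 5: "S.dim {x + y |x y. x \<in> X \<and> y \<in> V} \<le> S.dim W" by (rule S.dim_subset)
  have 6: "S.dim (X \<inter> V) \<le> S.dim V" by (rule S.dim_subset) blast
  have 7: "S.dim X \<le> S.dim W" by (rule S.dim_subset[OF X(2)])
  show ?thesis using 1 2 3 4 5 6 7 X(3) unfolding FF_def by linarith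
qed

lemma R_unit:
  assumes A: "S.subspace A" and B: "S.subspace B" and BA: "B \<subseteq> A"
  shows "dsum_rank s1 \<rho>1 s2 \<rho>2 A \<le> dsum_rank s1 \<rho>1 s2 \<rho>2 B + (S.dim A - S.dim B)"
proof -
  obtain X where X: "S.subspace X" "X \<subseteq> B" "dsum_rank s1 \<rho>1 s2 \<rho>2 B = FF B X"
    using R_attain[OF B] by blast
  have 1: "dsum_rank s1 \<rho>1 s2 \<rho>2 A \<le> FF A X" using R_le[OF X(1)] X(2) BA by blast
  have 2: "S.dim X \<le> S.dim B" by (rule S.dim_subset[OF X(2)])
  have 3: "S.dim B \<le> S.dim A" by (rule S.dim_subset[OF BA])
  show ?thesis using 1 2 3 X(3) unfolding FF_def by linarith
qed

end



lemma ssum_supA: "(0::'a::ab_group_add) \<in> W \<Longrightarrow> V \<subseteq> ssum V W"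
proof
  fix v assume "0 \<in> W" "v \<in> V"
  moreover have "v = v + 0" by simp
  ultimately show "v \<in> ssum V W" unfolding ssum_def by blast
qed

lemma ssum_supB: "(0::'a::ab_group_add) \<in> V \<Longrightarrow> W \<subseteq> ssum V W"
proof
  fix v assume "0 \<in> V" "v \<in> W"
  moreover have "v = 0 + v" by simp
  ultimately show "v \<in> ssum V W" unfolding ssum_def by blast
qed

context two begin

lemma cf_sub1: "Z \<in> cyclic_flats s1 \<rho>1 \<Longrightarrow> q1.subspace Z"
  unfolding cyclic_flats_def is_flat_def by blast
lemma cf_sub2: "Z \<in> cyclic_flats s2 \<rho>2 \<Longrightarrow> q2.subspace Z"
  unfolding cyclic_flats_def is_flat_def by blast

lemma S_ssum: "S.subspace V \<Longrightarrow> S.subspace W \<Longrightarrow> S.subspace (ssum V W)"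
  unfolding ssum_def by (rule S.subspace_sums)

lemma main:
  assumes V: "S.subspace V"
  shows "dsum_rank s1 \<rho>1 s2 \<rho>2 V =
    Min {dsum_rank s1 \<rho>1 s2 \<rho>2 (Z1 \<times> Z2)
           + quot_dim (prod_scale s1 s2) (ssum V (Z1 \<times> Z2)) (Z1 \<times> Z2)
         | Z1 Z2. Z1 \<in> cyclic_flats s1 \<rho>1 \<and> Z2 \<in> cyclic_flats s2 \<rho>2}"
    (is "?R V = Min ?T")
proof -
  have lower: "?R V \<le> ?R (Z1 \<times> Z2) + quot_dim (prod_scale s1 s2) (ssum V (Z1 \<times> Z2)) (Z1 \<times> Z2)"
    if "Z1 \<in> cyclic_flats s1 \<rho>1" "Z2 \<in> cyclic_flats s2 \<rho>2" for Z1 Z2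
  proof -
    let ?Z = "Z1 \<times> Z2"
    have Zs: "S.subspace ?Z" by (rule sub_times[OF cf_sub1[OF that(1)] cf_sub2[OF that(2)]])
    have Us: "S.subspace (ssum V ?Z)" by (rule S_ssum[OF V Zs])
    have "V \<subseteq> ssum V ?Z" using ssum_supA[OF S.subspace_0[OF Zs]] .
    then have "?R V \<le> ?R (ssum V ?Z)" by (rule R_mono[OF V Us])
    moreover have "?Z \<subseteq> ssum V ?Z" using ssum_supB[OF S.subspace_0[OF V]] .
    then have "?R (ssum V ?Z) \<le> ?R ?Z + (S.dim (ssum V ?Z) - S.dim ?Z)" by (rule R_unit[OF Us Zs])
    ultimately show ?thesis unfolding quot_dim_def by linarith
  qed
  obtain X where X: "S.subspace X" "X \<subseteq> V" "?R V = FF V X" using R_attain[OF V] by blast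
  let ?X1 = "fst ` X" and ?X2 = "snd ` X"
  have X1: "q1.subspace ?X1" by (rule sub_fst[OF X(1)])
  have X2: "q2.subspace ?X2" by (rule sub_snd[OF X(1)])
  obtain Z1 where Z1: "Z1 \<in> cyclic_flats s1 \<rho>1" "\<rho>1 Z1 + (q1.dim (ssum ?X1 Z1) - q1.dim Z1) \<le> \<rho>1 ?X1"
    using q1.exists_cf[OF X1] by blast
  obtain Z2 where Z2: "Z2 \<in> cyclic_flats s2 \<rho>2" "\<rho>2 Z2 + (q2.dim (ssum ?X2 Z2) - q2.dim Z2) \<le> \<rho>2 ?X2"
    using q2.exists_cf[OF X2] by blast
  have Z1s: "q1.subspace Z1" by (rule cf_sub1[OF Z1(1)])
  have Z2s: "q2.subspace Z2" by (rule cf_sub2[OF Z2(1)])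
  let ?Z = "Z1 \<times> Z2"
  have Zs: "S.subspace ?Z" by (rule sub_times[OF Z1s Z2s])
  let ?t = "?R ?Z + quot_dim (prod_scale s1 s2) (ssum V ?Z) ?Z"
  have tT: "?t \<in> ?T" using Z1(1) Z2(1) by blast
  have a: "S.dim (ssum V ?Z) + S.dim (V \<inter> ?Z) = S.dim V + S.dim ?Z"
    unfolding ssum_def by (rule S.dim_sums_Int[OF V Zs])
  have b: "S.dim (ssum X ?Z) + S.dim (X \<inter> ?Z) = S.dim X + S.dim ?Z"
    unfolding ssum_def by (rule S.dim_sums_Int[OF X(1) Zs])
  have "ssum X ?Z \<subseteq> ssum (?X1 \<times> ?X2) ?Z" unfolding ssum_def by force
  then have "ssum X ?Z \<subseteq> ssum ?X1 Z1 \<times> ssum ?X2 Z2" unfolding ssum_times .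
  then have "S.dim (ssum X ?Z) \<le> S.dim (ssum ?X1 Z1 \<times> ssum ?X2 Z2)" by (rule S.dim_subset)
  also have "\<dots> = q1.dim (ssum ?X1 Z1) + q2.dim (ssum ?X2 Z2)"
    by (rule dim_times[OF q1.subspace_ssum[OF X1 Z1s] q2.subspace_ssum[OF X2 Z2s]])
  finally have c: "S.dim (ssum X ?Z) \<le> q1.dim (ssum ?X1 Z1) + q2.dim (ssum ?X2 Z2)" .
  have d: "S.dim (X \<inter> ?Z) \<le> S.dim (V \<inter> ?Z)" using X(2) by (intro S.dim_subset) blast
  have e: "S.dim ?Z = q1.dim Z1 + q2.dim Z2" by (rule dim_times[OF Z1s Z2s])
  have f1: "q1.dim Z1 \<le> q1.dim (ssum ?X1 Z1)" by (rule q1.dim_subset[OF q1.ssum_sup2[OF X1]])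
  have f2: "q2.dim Z2 \<le> q2.dim (ssum ?X2 Z2)" by (rule q2.dim_subset[OF q2.ssum_sup2[OF X2]])
  have g: "S.dim X \<le> S.dim V" by (rule S.dim_subset[OF X(2)])
  have h: "?R ?Z \<le> \<rho>1 Z1 + \<rho>2 Z2" by (rule R_times[OF Z1s Z2s])
  have tle: "?t \<le> ?R V"
    using a b c d e f1 f2 g h Z1(2) Z2(2) X(3) unfolding quot_dim_def FF_def by linarith
  have fin: "finite ?T"
  proof (rule finite_subset[of _ "{..2 * S.dimension}"])
    show "?T \<subseteq> {..2 * S.dimension}"
    proof
      fix t assume "t \<in> ?T"
      then obtain Y1 Y2 where Y: "Y1 \<in> cyclic_flats s1 \<rho>1" "Y2 \<in> cyclic_flats s2 \<rho>2"
        "t = ?R (Y1 \<times> Y2) + quot_dim (prod_scale s1 s2) (ssum V (Y1 \<times> Y2)) (Y1 \<times> Y2)" by blast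
      have "?R (Y1 \<times> Y2) \<le> S.dim (Y1 \<times> Y2)"
        by (rule R_le_dim[OF sub_times[OF cf_sub1[OF Y(1)] cf_sub2[OF Y(2)]]])
      moreover have "S.dim (Y1 \<times> Y2) \<le> S.dimension" by (rule S.dim_subset_UNIV)
      moreover have "S.dim (ssum V (Y1 \<times> Y2)) \<le> S.dimension" by (rule S.dim_subset_UNIV)
      ultimately show "t \<in> {..2 * S.dimension}" using Y(3) unfolding quot_dim_def by simp
    qed
  qed simp
  have all: "?R V \<le> y" if "y \<in> ?T" for y using that lower by blast
  have "?t = ?R V" using tle all[OF tT] by simp
  then have "?R V \<in> ?T" using tT by simp
  then show ?thesis using Min_eqI[OF fin all] by simp
qed

end


theorem corollary5p9:
  fixes s1 :: "'f::{field,finite} \<Rightarrow> 'v1::ab_group_add \<Rightarrow> 'v1"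
    and s2 :: "'f \<Rightarrow> 'v2::ab_group_add \<Rightarrow> 'v2"
    and \<rho>1 :: "'v1 set \<Rightarrow> nat" and \<rho>2 :: "'v2 set \<Rightarrow> nat"
    and V :: "('v1 \<times> 'v2) set"
  assumes "qmatroid s1 \<rho>1" and "qmatroid s2 \<rho>2"
    and "module.subspace (prod_scale s1 s2) V"
  shows "dsum_rank s1 \<rho>1 s2 \<rho>2 V =
    Min {dsum_rank s1 \<rho>1 s2 \<rho>2 (Z1 \<times> Z2)
           + quot_dim (prod_scale s1 s2) (ssum V (Z1 \<times> Z2)) (Z1 \<times> Z2)
         | Z1 Z2. Z1 \<in> cyclic_flats s1 \<rho>1 \<and> Z2 \<in> cyclic_flats s2 \<rho>2}"
proof -
  obtain B1 where f1: "finite_dimensional_vector_space s1 B1" using qmatroid_fd[OF assms(1)] by blast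
  obtain B2 where f2: "finite_dimensional_vector_space s2 B2" using qmatroid_fd[OF assms(2)] by blast
  obtain BS where fS: "finite_dimensional_vector_space (prod_scale s1 s2) BS"
    using fd_prod[OF f1 f2] by blast
  interpret two s1 B1 \<rho>1 s2 B2 \<rho>2 BS
    by (simp add: two_def qm_def qm_axioms_def f1 f2 fS assms(1,2))
  show ?thesis by (rule main[OF assms(3)])
qed

end
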